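(* Let $x$ be a host whose flow cardinality is $N(x)$ and whose true subnet cardinality with respect to a targeted subnet of prefix length $l$ is $C(x)$, with $N(x)>C(x)$. Let $G$ be the IP segment width and $r=\lfloor l/G\rfloor$, with $r,G$ positive integers and $rG<32$. Let $\hat{C}_{full}(x)$ and $\hat{C}_{host}(x)$ be the estimated subnet cardinalities obtained by hashing full IP addresses and by hashing only host addresses, respectively, whose expected estimation errors are $$\mathbb{E}\left[|\hat{C}_{full}(x)-C(x)|\right]=2^{32}\left[1-\left(1-2^{-32}\right)^{N(x)-C(x)}\right],$$ $$\mathbb{E}\left[|\hat{C}_{host}(x)-C(x)|\right]=2^{32-rG}\left[1-\left(1-2^{rG-32}\right)^{(N(x)-C(x))(1/2)^{r}}\right].$$ Then $$\mathbb{E}\left[|\hat{C}_{full}(x)-C(x)|\right]>\mathbb{E}\left[|\hat{C}_{host}(x)-C(x)|\right].$$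
   Context: Setting: a host $x$ communicates with $N(x)$ distinct peers (32-bit IP addresses), $C(x)$ of which lie in a targeted subnet with prefix length $l$. Under the halved-segment hashing strategy, addresses are split into $G$-bit segments; a peer outside the subnet is mistakenly inferred to share the subnet prefix with probability $(1/2)^{\lfloor l/G\rfloor}$. Full-address hashing hashes entire addresses into a bitmap of size $2^{32}$ and all $N(x)-C(x)$ outside peers contaminate the count; host-address hashing hashes only the last $32-\lfloor l/G\rfloor G$ bits into a bitmap of size $2^{32-\lfloor l/G\rfloor G}$ and only the misinferred outside peers, expected number $(N(x)-C(x))(1/2)^{\lfloor l/G\rfloor}$, contaminate the count. With bitmap size $M$ and $U$ contaminating flows hashed independently and uniformly, the expected estimation error is $M[1-(1-M^{-1})^U]$, which gives the two displayed formulas. *)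

theory Defs
  imports Complex_Main
begin

end

theory Submission
  imports Defs
begin

theorem theorem2:
  fixes N C l G r :: nat and E_full E_host :: real
  assumes "N > C"
    and "G > 0" and "r > 0" and "r = l div G" and "r * G < 32"
    and "E_full = 2 ^ 32 * (1 - (1 - 2 powr (-32)) ^ (N - C))"
    and "E_host = 2 ^ (32 - r * G) *
           (1 - (1 - 2 powr (real (r * G) - 32)) powr (real (N - C) * (1 / 2) ^ r))"
  shows "E_full > E_host"
proof -
  define k where "k = r * G"
  define n where "n = N - C"
  define a :: real where "a = 1 - 2 powr (-32)"
  define b :: real where "b = 1 - 2 powr (real k - 32)"
  define u :: real where "u = real n * (1/2) ^ r"
  have k1: "k \<ge> 1" "k < 32" using assms by (auto simp: k_def)
  have n1: "n \<ge> 1" using assms by (simp add: n_def)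
  have "2 powr (real k - 32) \<le> 2 powr (-1::real)"
    using k1 by (intro powr_mono) auto
  hence bpos: "b > 0" by (simp add: b_def powr_minus)
  have b1: "b < 1" by (simp add: b_def)
  have ab: "b \<le> a" unfolding a_def b_def using k1 by (simp add: powr_mono)
  have "(1/2::real) ^ r < 1" using assms(3) by (simp add: power_less_one_iff)
  hence ul: "u < real n" using n1 unfolding u_def by (simp add: mult_less_cancel_left1)
  have bu: "b ^ n < b powr u"
    using powr_less_mono'[OF bpos b1 ul] bpos by (simp add: powr_realpow)
  define m :: real where "m = 2 ^ (32 - k)"
  have m1: "m * (1 - b) = 1"
  proof -
    have "m = 2 powr (real (32 - k))" by (simp add: m_def powr_realpow)
    also have "real (32 - k) = 32 - real k" using k1 by simp
    finally have "m * (1 - b) = 2 powr (32 - real k) * 2 powr (real k - 32)"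
      by (simp add: b_def)
    also have "\<dots> = 1" by (simp flip: powr_add)
    finally show ?thesis .
  qed
  have mpos: "m > 0" by (simp add: m_def)
  have "E_host = m * (1 - b powr u)"
    using assms(7) by (simp add: m_def b_def u_def k_def n_def)
  also have "\<dots> < m * (1 - b ^ n)" using bu mpos by simp
  also have "\<dots> = (\<Sum>i<n. b ^ i)"
    by (simp add: one_diff_power_eq m1 flip: mult.assoc)
  also have "\<dots> \<le> (\<Sum>i<n. a ^ i)"
    by (intro sum_mono power_mono ab) (use bpos in simp)
  also have "\<dots> = E_full"
  proof -
    have "(2::real) ^ 32 * (1 - a) = 1" by (simp add: a_def powr_minus powr_realpow)
    thus ?thesis using assms(6)
      by (simp add: one_diff_power_eq a_def n_def flip: mult.assoc)
  qed
  finally show ?thesis .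
qed

end
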